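(* Let $\mathcal G$ be a core network with input nodes $\iota_1,\dots,\iota_n$ and output node $o$, and let $B_j$ be an appendage homeostasis block of $\langle H\rangle$, with associated subnetwork $\mathcal K_j$. Then: (a) each node in $\mathcal K_j$ is an absolutely appendage node; (b) for every $m=1,\dots,n$ and every $\iota_mo$-simple path $S$, nodes in $\mathcal K_j$ are not $CS$-path equivalent to any node in $CS\setminus\mathcal K_j$; (c) $\mathcal K_j$ is a path component of $\mathcal A_{\mathcal G}$.
   Context: Node $b$ is downstream from $a$ (and $a$ upstream from $b$) if there is a directed path from $a$ to $b$ (every node is up/downstream from itself). A core network: every node is upstream from $o$ and downstream from at least one input node. A simple path visits each node at most once; an $\iota_mo$-simple path is a simple path from $\iota_m$ to $o$. A node is $\iota_m$-simple if it lies on an $\iota_mo$-simple path, and $\iota_m$-appendage if it is downstream from $\iota_m$ but not $\iota_m$-simple; it is absolutely appendage if it is $\iota_m$-appendage for every $m$. $\mathcal A_{\mathcal G}$ is the subnetwork of all absolutely appendage nodes with all arrows of $\mathcal G$ between them. For a subnetwork $\mathcal K$, nodes $a,b$ are $\mathcal K$-path equivalent if there are paths within $\mathcal K$ from $a$ to $b$ and from $b$ to $a$; a $\mathcal K$-path component is an equivalence class. For an $\iota_mo$-simple path $S$, $CS$ is the subnetwork of all nodes of $\mathcal G$ not on $S$ with all arrows of $\mathcal G$ between them. An admissible system has variables $x_j$ per node with $\dot x_{\iota_m}=f_{\iota_m}(X,\mathcal I)$, $\dot x_j=f_j(X)$ otherwise, $f_{j,x_\ell}=\partial f_j/\partial x_\ell\equiv0$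 unless there is an arrow $\ell\to j$ (all nodes self-coupled), $f_{\iota_m,\mathcal I}\neq0$; these entries are treated as independent indeterminates. $J_{\mathcal K}=(f_{j,x_\ell})_{j,\ell\in\mathcal K}$. $\langle H\rangle$ is the Jacobian over all nodes (output last) with last column replaced by $(-f_{\iota_m,\mathcal I}$ in row $\iota_m$, $0$ elsewhere$)$. By Frobenius–König theory, $P\langle H\rangle Q$ is block upper triangular with square fully indecomposable diagonal blocks (irreducible determinants) for suitable permutation matrices $P,Q$. A diagonal block of order $k$ containing no $f_{\iota_m,\mathcal I}$ and exactly $k$ self-coupling entries $f_{\ell,x_\ell}$ is an appendage homeostasis block; such a block, after permuting rows and columns, equals $J_{\mathcal K}$ for the set $\mathcal K$ of nodes indexing its rows, which is its associated subnetwork. *)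

theory Defs
  imports Main
begin

text \<open>A network: finite node set V, arrows E (pairs (a,b) meaning a -> b), a nonempty
  set I of input nodes and an output node out.\<close>

definition network :: "'v set \<Rightarrow> ('v \<times> 'v) set \<Rightarrow> 'v set \<Rightarrow> 'v \<Rightarrow> bool" where
  "network V E I out \<longleftrightarrow> finite V \<and> E \<subseteq> V \<times> V \<and> I \<subseteq> V \<and> I \<noteq> {} \<and> out \<in> V \<and> out \<notin> I"

definition downstream :: "('v \<times> 'v) set \<Rightarrow> 'v \<Rightarrow> 'v \<Rightarrow> bool" where
  "downstream E a b \<longleftrightarrow> (a, b) \<in> E\<^sup>*"

definition core_network :: "'v set \<Rightarrow> ('v \<times> 'v) set \<Rightarrow> 'v set \<Rightarrow> 'v \<Rightarrow> bool" where
  "core_network V E I out \<longleftrightarrow> network V E I out \<and>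
     (\<forall>v\<in>V. downstream E v out \<and> (\<exists>i\<in>I. downstream E i v))"

definition simple_path :: "('v \<times> 'v) set \<Rightarrow> 'v list \<Rightarrow> 'v \<Rightarrow> 'v \<Rightarrow> bool" where
  "simple_path E S a b \<longleftrightarrow> S \<noteq> [] \<and> hd S = a \<and> last S = b \<and> distinct S \<and>
     (\<forall>k. Suc k < length S \<longrightarrow> (S ! k, S ! Suc k) \<in> E)"

definition input_simple :: "('v \<times> 'v) set \<Rightarrow> 'v \<Rightarrow> 'v \<Rightarrow> 'v \<Rightarrow> bool" where
  "input_simple E out i v \<longleftrightarrow> (\<exists>S. simple_path E S i out \<and> v \<in> set S)"

definition input_appendage :: "('v \<times> 'v) set \<Rightarrow> 'v \<Rightarrow> 'v \<Rightarrow> 'v \<Rightarrow> bool" where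
  "input_appendage E out i v \<longleftrightarrow> downstream E i v \<and> \<not> input_simple E out i v"

definition absolutely_appendage ::
  "'v set \<Rightarrow> ('v \<times> 'v) set \<Rightarrow> 'v set \<Rightarrow> 'v \<Rightarrow> 'v \<Rightarrow> bool" where
  "absolutely_appendage V E I out v \<longleftrightarrow> v \<in> V \<and> (\<forall>i\<in>I. input_appendage E out i v)"

text \<open>Node set of the subnetwork A_G (its arrows are all arrows of E between these nodes).\<close>
definition appendage_nodes :: "'v set \<Rightarrow> ('v \<times> 'v) set \<Rightarrow> 'v set \<Rightarrow> 'v \<Rightarrow> 'v set" where
  "appendage_nodes V E I out = {v. absolutely_appendage V E I out v}"

definition path_within :: "('v \<times> 'v) set \<Rightarrow> 'v set \<Rightarrow> 'v \<Rightarrow> 'v \<Rightarrow> bool" where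
  "path_within E K a b \<longleftrightarrow> a \<in> K \<and> b \<in> K \<and> (a, b) \<in> (E \<inter> (K \<times> K))\<^sup>*"

definition path_equivalent :: "('v \<times> 'v) set \<Rightarrow> 'v set \<Rightarrow> 'v \<Rightarrow> 'v \<Rightarrow> bool" where
  "path_equivalent E K a b \<longleftrightarrow> path_within E K a b \<and> path_within E K b a"

definition path_component :: "('v \<times> 'v) set \<Rightarrow> 'v set \<Rightarrow> 'v set \<Rightarrow> bool" where
  "path_component E K C \<longleftrightarrow> (\<exists>a\<in>K. C = {b. path_equivalent E K a b})"

definition compl_nodes :: "'v set \<Rightarrow> 'v list \<Rightarrow> 'v set" where
  "compl_nodes V S = V - set S"

text \<open>Entries of the matrix <H>, as independent indeterminates:
  Jac j l stands for f_{j,x_l}, Inp i for f_{i,I}, Zero for the zero entry.\<close>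
datatype 'v entry = Jac 'v 'v | Inp 'v | Zero

text \<open>Entry in row j, column l of <H> (columns indexed by nodes; the output column is replaced).\<close>
definition H_entry :: "('v \<times> 'v) set \<Rightarrow> 'v set \<Rightarrow> 'v \<Rightarrow> 'v \<Rightarrow> 'v \<Rightarrow> 'v entry" where
  "H_entry E I out j l =
     (if l = out then (if j \<in> I then Inp j else Zero)
      else if (l, j) \<in> E \<or> l = j then Jac j l else Zero)"

definition fully_indecomposable :: "('v \<Rightarrow> 'v \<Rightarrow> 'v entry) \<Rightarrow> 'v set \<Rightarrow> 'v set \<Rightarrow> bool" where
  "fully_indecomposable M R C \<longleftrightarrow> R \<noteq> {} \<and> card R = card C \<and>
     (\<forall>X Y. X \<subseteq> R \<and> Y \<subseteq> C \<and> X \<noteq> {} \<and> Y \<noteq> {} \<and> card X + card Y \<ge> card R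
        \<longrightarrow> (\<exists>x\<in>X. \<exists>y\<in>Y. M x y \<noteq> Zero))"

text \<open>A Frobenius--Koenig decomposition P M Q of M (rows and columns indexed by V):
  an ordered list of diagonal blocks (row set, column set) partitioning rows and columns,
  each fully indecomposable, all entries below the block diagonal zero.\<close>
definition FK_decomposition ::
  "'v set \<Rightarrow> ('v \<Rightarrow> 'v \<Rightarrow> 'v entry) \<Rightarrow> ('v set \<times> 'v set) list \<Rightarrow> bool" where
  "FK_decomposition V M bs \<longleftrightarrow>
     (\<Union>b\<in>set bs. fst b) = V \<and> (\<Union>b\<in>set bs. snd b) = V \<and>
     (\<forall>i j. i < j \<and> j < length bs \<longrightarrow>
        fst (bs ! i) \<inter> fst (bs ! j) = {} \<and> snd (bs ! i) \<inter> snd (bs ! j) = {}) \<and>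
     (\<forall>b\<in>set bs. fully_indecomposable M (fst b) (snd b)) \<and>
     (\<forall>i k. k < i \<and> i < length bs \<longrightarrow>
        (\<forall>r\<in>fst (bs ! i). \<forall>c\<in>snd (bs ! k). M r c = Zero))"

definition appendage_block ::
  "('v \<times> 'v) set \<Rightarrow> 'v set \<Rightarrow> 'v \<Rightarrow> 'v set \<Rightarrow> 'v set \<Rightarrow> bool" where
  "appendage_block E I out R C \<longleftrightarrow>
     (\<forall>r\<in>R. \<forall>c\<in>C. \<forall>i. H_entry E I out r c \<noteq> Inp i) \<and>
     card {l. l \<in> R \<and> l \<in> C \<and> H_entry E I out l l = Jac l l} = card R"

end

theory Submission
  imports Defs "HOL-Combinatorics.Cycles"
begin

lemma sp_alt: "simple_path E S a b \<longleftrightarrow> S \<noteq> [] \<and> hd S = a \<and> last S = b \<and> distinct S \<and>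
   successively (\<lambda>x y. (x,y)\<in>E) S"
  by (simp add: simple_path_def successively_conv_nth)

lemma succ_reach: "successively (\<lambda>x y. (x,y)\<in>E) S \<Longrightarrow> S \<noteq> [] \<Longrightarrow> x \<in> set S \<Longrightarrow>
   (hd S, x) \<in> E\<^sup>* \<and> (x, last S) \<in> E\<^sup>*"
proof (induction S arbitrary: x)
  case Nil then show ?case by simp
next
  case (Cons y S')
  show ?case
  proof (cases "S' = []")
    case True then show ?thesis using Cons by simp
  next
    case False
    then have e: "(y, hd S') \<in> E" and s: "successively (\<lambda>x y. (x,y)\<in>E) S'"
      using Cons.prems(1) by (auto simp: successively_Cons)
    have l: "(hd S', last S') \<in> E\<^sup>*" using Cons.IH[OF s False, of "hd S'"] False by simp
    show ?thesis
    proof (cases "x = y")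
      case True then show ?thesis using e l False
        by (simp add: converse_rtrancl_into_rtrancl)
    next
      case xy: False
      then have "x \<in> set S'" using Cons.prems by simp
      then show ?thesis using Cons.IH[OF s False] e False
        by (auto intro: converse_rtrancl_into_rtrancl)
    qed
  qed
qed

lemma sp_reach: "simple_path E S a b \<Longrightarrow> x \<in> set S \<Longrightarrow> (a,x)\<in>E\<^sup>* \<and> (x,b)\<in>E\<^sup>*"
  unfolding sp_alt using succ_reach by metis

lemma exists_sp: "(a,b) \<in> (E \<inter> K \<times> K)\<^sup>* \<Longrightarrow> a \<in> K \<Longrightarrow> \<exists>S. simple_path E S a b \<and> set S \<subseteq> K"
proof (induction rule: converse_rtrancl_induct)
  case base
  then show ?case by (auto simp: sp_alt)
next
  case (step a c)
  then obtain S where S: "simple_path E S c b" "set S \<subseteq> K" by auto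
  show ?case
  proof (cases "a \<in> set S")
    case True
    then obtain xs ys where sp: "S = xs @ a # ys" by (metis split_list)
    have "simple_path E (a # ys) a b" using S(1) unfolding sp_alt sp
      by (auto simp: successively_append_iff)
    then show ?thesis using S(2) sp by (intro exI[of _ "a#ys"]) auto
  next
    case False
    have "simple_path E (a # S) a b" using S(1) False step(1) unfolding sp_alt
      by (auto simp: successively_Cons)
    then show ?thesis using S(2) step by (intro exI[of _ "a#S"]) auto
  qed
qed

lemma sp_append: "simple_path E A a x \<Longrightarrow> simple_path E B y b \<Longrightarrow> (x,y) \<in> E \<Longrightarrow>
   set A \<inter> set B = {} \<Longrightarrow> simple_path E (A @ B) a b"
  unfolding sp_alt by (auto simp: successively_append_iff)

lemma entry_edge: "(a,b) \<in> E\<^sup>* \<Longrightarrow> a \<notin> R \<Longrightarrow> b \<in> R \<Longrightarrow>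
  \<exists>x y. (a,x) \<in> E\<^sup>* \<and> (x,y) \<in> E \<and> x \<notin> R \<and> y \<in> R"
proof (induction rule: rtrancl_induct)
  case base then show ?case by simp
next
  case (step b' b)
  then show ?case by (cases "b' \<in> R") auto
qed

lemma restrict_up: "(y,x) \<in> E\<^sup>* \<Longrightarrow> (\<And>z. (z,x) \<in> E\<^sup>* \<Longrightarrow> z \<in> K) \<Longrightarrow> (y,x) \<in> (E \<inter> K \<times> K)\<^sup>*"
proof (induction rule: converse_rtrancl_induct)
  case base then show ?case by simp
next
  case (step y y')
  then have "(y, y') \<in> E \<inter> K \<times> K"
    by (meson IntI SigmaI converse_rtrancl_into_rtrancl)
  then show ?case using step by (meson converse_rtrancl_into_rtrancl)
qed

lemma cyc_gen: "distinct cs \<Longrightarrow> j < length cs \<Longrightarrow> cycle_of_list cs (cs ! j) = cs ! (Suc j mod length cs)"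
proof -
  assume d: "distinct cs" and j: "j < length cs"
  have "map (cycle_of_list cs) cs = rotate1 cs" using cyclic_rotation[OF d, of 1] by simp
  then have "map (cycle_of_list cs) cs ! j = rotate1 cs ! j" by simp
  then show ?thesis using j by (simp add: nth_rotate1)
qed

lemma cyc_pred: "distinct L \<Longrightarrow> Suc k < length L \<Longrightarrow> cycle_of_list (rev L) (L ! Suc k) = L ! k"
proof -
  assume d: "distinct L" and k: "Suc k < length L"
  define n where "n = length L"
  have "L ! Suc k = rev L ! (n - 2 - k)" using k by (simp add: rev_nth n_def)
  moreover have "cycle_of_list (rev L) (rev L ! (n - 2 - k)) = rev L ! (Suc (n - 2 - k) mod n)"
    using cyc_gen[of "rev L" "n - 2 - k"] d k by (simp add: n_def)
  moreover have "Suc (n - 2 - k) mod n = n - 1 - k" using k by (simp add: n_def)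
  moreover have "rev L ! (n - 1 - k) = L ! k" using k by (simp add: rev_nth n_def)
  ultimately show ?thesis by simp
qed

lemma cyc_hd: "distinct L \<Longrightarrow> L \<noteq> [] \<Longrightarrow> cycle_of_list (rev L) (hd L) = last L"
proof -
  assume d: "distinct L" and ne: "L \<noteq> []"
  define n where "n = length L"
  have n: "n > 0" using ne by (simp add: n_def)
  have "hd L = rev L ! (n - 1)" using ne n by (simp add: rev_nth n_def hd_conv_nth)
  moreover have "cycle_of_list (rev L) (rev L ! (n - 1)) = rev L ! (Suc (n - 1) mod n)"
    using cyc_gen[of "rev L" "n - 1"] d n by (simp add: n_def)
  moreover have "Suc (n - 1) mod n = 0" using n by simp
  moreover have "rev L ! 0 = last L" using ne by (simp add: hd_rev[symmetric] hd_conv_nth)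
  ultimately show ?thesis by simp
qed

locale blk =
  fixes V :: "'v set" and E I out bs R
  assumes core: "core_network V E I out"
    and fk: "FK_decomposition V (H_entry E I out) bs"
    and inR: "(R, R) \<in> set bs"
    and outR: "out \<notin> R"
begin

lemma finV: "finite V" using core by (simp add: core_network_def network_def)

lemma matching:
  assumes p: "\<sigma> permutes V" and nz: "\<forall>r\<in>V. H_entry E I out r (\<sigma> r) \<noteq> Zero" and r: "r \<in> R"
  shows "\<sigma> r \<in> R"
proof -
  define n where "n = length bs"
  obtain k where k: "k < n" "bs ! k = (R, R)" using inR by (metis in_set_conv_nth n_def)
  define S where "S j = (\<Union>l\<in>{j..<n}. fst (bs ! l))" for j
  define T where "T j = (\<Union>l\<in>{j..<n}. snd (bs ! l))" for j
  have U: "(\<Union>b\<in>set bs. fst b) = V" "(\<Union>b\<in>set bs. snd b) = V" using fk by (auto simp: FK_decomposition_def)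
  have sub: "fst (bs ! l) \<subseteq> V" "snd (bs ! l) \<subseteq> V" if "l < n" for l
    using U that n_def nth_mem by fastforce+
  have disj: "fst (bs ! l) \<inter> fst (bs ! l') = {} \<and> snd (bs ! l) \<inter> snd (bs ! l') = {}"
    if "l < n" "l' < n" "l \<noteq> l'" for l l'
  proof (cases "l < l'")
    case True then show ?thesis using fk that by (auto simp: FK_decomposition_def n_def)
  next
    case False then have "l' < l" using that by simp
    then have "fst (bs ! l') \<inter> fst (bs ! l) = {} \<and> snd (bs ! l') \<inter> snd (bs ! l) = {}"
      using fk that unfolding FK_decomposition_def n_def by blast
    then show ?thesis by blast
  qed
  have fi: "fully_indecomposable (H_entry E I out) (fst (bs ! l)) (snd (bs ! l))" if "l < n" for l
    using fk that by (auto simp: FK_decomposition_def n_def)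
  have cardS: "card (S j) = (\<Sum>l\<in>{j..<n}. card (fst (bs ! l)))" for j
    unfolding S_def
  proof (rule card_UN_disjoint)
    show "\<forall>i\<in>{j..<n}. \<forall>j'\<in>{j..<n}. i \<noteq> j' \<longrightarrow> fst (bs ! i) \<inter> fst (bs ! j') = {}"
      using disj by simp
  qed (auto intro: finite_subset[OF sub(1) finV])
  have cardT: "card (T j) = (\<Sum>l\<in>{j..<n}. card (snd (bs ! l)))" for j
    unfolding T_def
  proof (rule card_UN_disjoint)
    show "\<forall>i\<in>{j..<n}. \<forall>j'\<in>{j..<n}. i \<noteq> j' \<longrightarrow> snd (bs ! i) \<inter> snd (bs ! j') = {}"
      using disj by simp
  qed (auto intro: finite_subset[OF sub(2) finV])
  have cardST: "card (S j) = card (T j)" for j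
    unfolding cardS cardT using fi by (intro sum.cong) (auto simp: fully_indecomposable_def)
  have mapST: "\<sigma> x \<in> T j" if xS: "x \<in> S j" for x j
  proof -
    obtain l where l: "j \<le> l" "l < n" "x \<in> fst (bs ! l)" using xS by (auto simp: S_def)
    have xV: "x \<in> V" using sub l by auto
    then have "\<sigma> x \<in> V" using p by (simp add: permutes_in_image)
    then obtain l' where l': "l' < n" "\<sigma> x \<in> snd (bs ! l')" using U(2)
      by (auto simp: in_set_conv_nth n_def)
    have "\<not> l' < l"
    proof
      assume "l' < l"
      then have "H_entry E I out x (\<sigma> x) = Zero" using fk l l' by (auto simp: FK_decomposition_def n_def)
      then show False using nz xV by auto
    qed
    then show ?thesis using l l' by (auto simp: T_def)
  qed
  have finT: "finite (T j)" for j unfolding T_def using sub(2) finV by (meson atLeastLessThan_iff finite_UN_I finite_atLeastLessThan finite_subset)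
  have inj: "inj \<sigma>" using p by (simp add: permutes_inj)
  have img: "\<sigma> ` S (Suc k) = T (Suc k)"
  proof (rule card_subset_eq[OF finT])
    show "\<sigma> ` S (Suc k) \<subseteq> T (Suc k)" using mapST by auto
    show "card (\<sigma> ` S (Suc k)) = card (T (Suc k))"
      using cardST card_image inj by (metis inj_on_subset subset_UNIV)
  qed
  have rS: "r \<in> S k" unfolding S_def using r k by (intro UN_I[of k]) auto
  obtain l' where l': "k \<le> l'" "l' < n" "\<sigma> r \<in> snd (bs ! l')" using mapST[OF rS] by (auto simp: T_def)
  show ?thesis
  proof (cases "l' = k")
    case True then show ?thesis using l' k by simp
  next
    case False
    then have "\<sigma> r \<in> T (Suc k)" using l' by (auto simp: T_def)
    then obtain r' where r': "r' \<in> S (Suc k)" "\<sigma> r' = \<sigma> r" using img by (metis imageE)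
    then have "r' = r" using inj by (simp add: inj_eq)
    then obtain l where "Suc k \<le> l" "l < n" "r \<in> fst (bs ! l)" using r' by (auto simp: S_def)
    then have False using disj[of k l] k r by auto
    then show ?thesis by simp
  qed
qed


lemma EV: "E \<subseteq> V \<times> V" and IV: "I \<subseteq> V" and outV: "out \<in> V" and Ine: "I \<noteq> {}" and outI: "out \<notin> I"
  using core by (auto simp: core_network_def network_def)

lemma reachV: "(a,b) \<in> E\<^sup>* \<Longrightarrow> a \<in> V \<Longrightarrow> b \<in> V"
  by (induction rule: rtrancl_induct) (use EV in auto)

lemma spV: "simple_path E Q i out \<Longrightarrow> i \<in> I \<Longrightarrow> set Q \<subseteq> V"
proof
  fix x assume "simple_path E Q i out" "i \<in> I" "x \<in> set Q"
  then have "(i, x) \<in> E\<^sup>*" "i \<in> V" using sp_reach[of E Q i out x] IV by auto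
  then show "x \<in> V" by (rule reachV)
qed

lemma H_jac: "c \<noteq> out \<Longrightarrow> (c,r) \<in> E \<or> c = r \<Longrightarrow> H_entry E I out r c \<noteq> Zero"
  by (auto simp: H_entry_def)

lemma H_inp: "r \<in> I \<Longrightarrow> H_entry E I out r out \<noteq> Zero"
  by (auto simp: H_entry_def)

lemma sigma_exists:
  assumes Q: "simple_path E Q i out" and iI: "i \<in> I"
    and Zd: "distinct Z" and Zs: "successively (\<lambda>x y. (x,y)\<in>E) Z"
    and Zc: "Z \<noteq> [] \<Longrightarrow> (last Z, hd Z) \<in> E" and ZV: "set Z \<subseteq> V" and ZQ: "set Z \<inter> set Q = {}"
  shows "\<exists>\<sigma>. \<sigma> permutes V \<and> (\<forall>r\<in>V. H_entry E I out r (\<sigma> r) \<noteq> Zero) \<and>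
     (\<forall>k. Suc k < length Q \<longrightarrow> \<sigma> (Q ! Suc k) = Q ! k) \<and> \<sigma> i = out \<and>
     (Z \<noteq> [] \<longrightarrow> \<sigma> (hd Z) = last Z)"
proof -
  define sQ where "sQ = cycle_of_list (rev Q)"
  define sZ where "sZ = cycle_of_list (rev Z)"
  have Qp: "Q \<noteq> []" "hd Q = i" "last Q = out" "distinct Q" "successively (\<lambda>x y. (x,y)\<in>E) Q"
    using Q by (auto simp: sp_alt)
  have QV: "set Q \<subseteq> V" using spV Q iI by blast
  have pQ: "sQ permutes set Q" unfolding sQ_def using cycle_permutes[of "rev Q"] by simp
  have pZ: "sZ permutes set Z" unfolding sZ_def using cycle_permutes[of "rev Z"] by simp
  have perm: "(sQ \<circ> sZ) permutes V"
    using permutes_compose[OF permutes_subset[OF pZ ZV] permutes_subset[OF pQ QV]] .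
  have outQ: "out \<in> set Q" using Qp by auto
  have sZout: "sZ x = x" if "x \<notin> set Z" for x using pZ that by (simp add: permutes_not_in)
  have sQout: "sQ x = x" if "x \<notin> set Q" for x using pQ that by (simp add: permutes_not_in)
  have sZin: "sZ x \<in> set Z" if "x \<in> set Z" for x using pZ that by (simp add: permutes_in_image)
  have sQin: "sQ x \<in> set Q" if "x \<in> set Q" for x using pQ that by (simp add: permutes_in_image)
  have Qpred: "sQ (Q ! Suc k) = Q ! k" if "Suc k < length Q" for k
    unfolding sQ_def using cyc_pred Qp(4) that by blast
  have Qhd: "sQ i = out" unfolding sQ_def using cyc_hd[OF Qp(4) Qp(1)] Qp by simp
  have Zpred: "sZ (Z ! Suc k) = Z ! k" if "Suc k < length Z" for k
    unfolding sZ_def using cyc_pred Zd that by blast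
  have Zhd: "sZ (hd Z) = last Z" if "Z \<noteq> []" unfolding sZ_def using cyc_hd[OF Zd that] .
  have comp: "(sQ \<circ> sZ) x = (if x \<in> set Z then sZ x else sQ x)" for x
    using sZout sQout sZin ZQ by auto
  have nz: "H_entry E I out r ((sQ \<circ> sZ) r) \<noteq> Zero" if rV: "r \<in> V" for r
  proof (cases "r \<in> set Z")
    case True
    then obtain j where j: "j < length Z" "r = Z ! j" by (metis in_set_conv_nth)
    have cZ: "sZ r \<in> set Z" using sZin True by blast
    then have cne: "sZ r \<noteq> out" using ZQ outQ by blast
    have "(sZ r, r) \<in> E"
    proof (cases j)
      case 0
      then have "r = hd Z" using j by (simp add: hd_conv_nth)
      then show ?thesis using Zhd Zc j by fastforce
    next
      case (Suc k)
      then show ?thesis using Zpred[of k] j successively_nth[OF Zs, of k] by simp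
    qed
    then show ?thesis using comp True H_jac cne by simp
  next
    case nZ: False
    show ?thesis
    proof (cases "r \<in> set Q")
      case True
      then obtain j where j: "j < length Q" "r = Q ! j" by (metis in_set_conv_nth)
      show ?thesis
      proof (cases j)
        case 0
        then have "r = i" using j Qp by (simp add: hd_conv_nth)
        then show ?thesis using comp nZ Qhd H_inp iI by simp
      next
        case (Suc k)
        have e: "(Q ! k, r) \<in> E" using Suc j successively_nth[OF Qp(5), of k] by simp
        have "Q ! k \<noteq> out"
        proof
          assume "Q ! k = out"
          then have "Q ! k = Q ! (length Q - 1)" using Qp by (simp add: last_conv_nth)
          then show False using Qp(4) j Suc by (simp add: nth_eq_iff_index_eq)
        qed
        then show ?thesis using comp nZ Qpred[of k] Suc j e H_jac by simp
      qed
    next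
      case False
      then have "r \<noteq> out" using outQ by blast
      then show ?thesis using comp nZ False sQout H_jac by simp
    qed
  qed
  have a1: "(sQ \<circ> sZ) (Q ! Suc k) = Q ! k" if "Suc k < length Q" for k
  proof -
    have "Q ! Suc k \<notin> set Z" using ZQ that nth_mem by blast
    then show ?thesis using comp Qpred that by simp
  qed
  have a2: "(sQ \<circ> sZ) i = out"
  proof -
    have "i \<in> set Q" using Qp hd_in_set by blast
    then have "i \<notin> set Z" using ZQ by blast
    then show ?thesis using comp Qhd by simp
  qed
  have a3: "(sQ \<circ> sZ) (hd Z) = last Z" if "Z \<noteq> []"
    using comp Zhd that hd_in_set by metis
  show ?thesis
    apply (rule exI[of _ "sQ \<circ> sZ"])
    using perm nz a1 a2 a3 by blast
qed


lemma RV: "R \<subseteq> V"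
  using fk inR by (auto simp: FK_decomposition_def)

lemma finR: "finite R" using RV finV finite_subset by blast

lemma fiR: "fully_indecomposable (H_entry E I out) R R"
  using fk inR unfolding FK_decomposition_def by fastforce

lemma strong: assumes a: "a \<in> R" and b: "b \<in> R" shows "(a,b) \<in> (E \<inter> R \<times> R)\<^sup>*"
proof (rule ccontr)
  assume nb: "(a,b) \<notin> (E \<inter> R \<times> R)\<^sup>*"
  define Y where "Y = {y\<in>R. (a,y) \<in> (E \<inter> R \<times> R)\<^sup>*}"
  define X where "X = R - Y"
  have XY: "X \<subseteq> R" "Y \<subseteq> R" "X \<noteq> {}" "Y \<noteq> {}" using a b nb by (auto simp: X_def Y_def)
  have "card X + card Y = card R" unfolding X_def
    using card_Diff_subset[OF finite_subset[OF XY(2) finR] XY(2)] card_mono[OF finR XY(2)] by simp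
  moreover have fa: "\<forall>X Y. X \<subseteq> R \<and> Y \<subseteq> R \<and> X \<noteq> {} \<and> Y \<noteq> {} \<and> card X + card Y \<ge> card R
        \<longrightarrow> (\<exists>x\<in>X. \<exists>y\<in>Y. H_entry E I out x y \<noteq> Zero)"
    using fiR unfolding fully_indecomposable_def by blast
  ultimately have "\<exists>x\<in>X. \<exists>y\<in>Y. H_entry E I out x y \<noteq> Zero"
    using XY fa[rule_format, of X Y] by simp
  then obtain x y where xy: "x \<in> X" "y \<in> Y" "H_entry E I out x y \<noteq> Zero" by blast
  have "y \<noteq> out" using xy XY outR by blast
  moreover have "x \<noteq> y" using xy X_def by blast
  ultimately have e: "(y,x) \<in> E" using xy(3) by (auto simp: H_entry_def split: if_splits)
  have "(a,y) \<in> (E \<inter> R \<times> R)\<^sup>*" using xy Y_def by blast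
  moreover have "(y,x) \<in> E \<inter> R \<times> R" using e xy XY by blast
  ultimately have "(a,x) \<in> (E \<inter> R \<times> R)\<^sup>*" by (rule rtrancl.rtrancl_into_rtrancl)
  moreover have "x \<in> R" using xy XY by blast
  ultimately have "x \<in> Y" unfolding Y_def by blast
  then show False using xy(1) unfolding X_def by blast
qed

lemma strongE: "a \<in> R \<Longrightarrow> b \<in> R \<Longrightarrow> (a,b) \<in> E\<^sup>*"
  using strong rtrancl_mono[of "E \<inter> R \<times> R" E] by blast

lemma sp_exists: "i \<in> V \<Longrightarrow> \<exists>Q. simple_path E Q i out"
proof -
  assume iV: "i \<in> V"
  have "(i, out) \<in> E\<^sup>*" using core iV by (auto simp: core_network_def downstream_def)
  moreover have "E \<inter> V \<times> V = E" using EV by blast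
  ultimately show ?thesis using exists_sp[of i out E V] iV by auto
qed

lemma no_simple: assumes iI: "i \<in> I" and Q: "simple_path E Q i out" shows "R \<inter> set Q = {}"
proof (rule ccontr)
  assume "R \<inter> set Q \<noteq> {}"
  then obtain j0 where j0: "j0 < length Q" "Q ! j0 \<in> R" by (metis disjoint_iff in_set_conv_nth)
  define j where "j = (LEAST j. j < length Q \<and> Q ! j \<in> R)"
  have j: "j < length Q" "Q ! j \<in> R" using LeastI[of "\<lambda>j. j < length Q \<and> Q ! j \<in> R", OF conjI[OF j0]]
    by (auto simp: j_def)
  obtain \<sigma> where s: "\<sigma> permutes V" "\<forall>r\<in>V. H_entry E I out r (\<sigma> r) \<noteq> Zero"
    "\<forall>k. Suc k < length Q \<longrightarrow> \<sigma> (Q ! Suc k) = Q ! k" "\<sigma> i = out"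
    using sigma_exists[OF Q iI, of "[]"] by auto
  have sR: "\<sigma> (Q ! j) \<in> R" using matching[OF s(1) s(2) j(2)] .
  show False
  proof (cases j)
    case 0
    then have "Q ! j = i" using Q by (auto simp: sp_alt hd_conv_nth)
    then show False using sR s(4) outR by simp
  next
    case (Suc k)
    then have "Q ! k \<in> R" using sR s(3) j by simp
    moreover have "k < j" using Suc by simp
    ultimately show False using not_less_Least[of k "\<lambda>j. j < length Q \<and> Q ! j \<in> R"] j
      unfolding j_def by simp
  qed
qed

lemma core_contra:
  assumes iI: "i \<in> I" and Q: "simple_path E Q i out" and e: "(x,y) \<in> E" and x: "x \<notin> R" and y: "y \<in> R"
    and xQ: "x \<notin> set Q" and yQ: "y \<notin> set Q" and p: "(y,x) \<in> (E \<inter> (V - set Q) \<times> (V - set Q))\<^sup>*"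
  shows False
proof -
  have yK: "y \<in> V - set Q" using yQ e EV by auto
  obtain Z where Z: "simple_path E Z y x" "set Z \<subseteq> V - set Q" using exists_sp[OF p yK] by blast
  have Zp: "Z \<noteq> []" "hd Z = y" "last Z = x" "distinct Z" "successively (\<lambda>x y. (x,y)\<in>E) Z"
    using Z(1) by (auto simp: sp_alt)
  obtain \<sigma> where s: "\<sigma> permutes V" "\<forall>r\<in>V. H_entry E I out r (\<sigma> r) \<noteq> Zero" "\<sigma> (hd Z) = last Z"
    using sigma_exists[OF Q iI Zp(4) Zp(5) _ _ _] Zp e Z(2) by blast
  have "\<sigma> y \<in> R" using matching[OF s(1) s(2) y] .
  then show False using s(3) Zp x by simp
qed

lemma upV: "(z,x) \<in> E\<^sup>* \<Longrightarrow> x \<in> V \<Longrightarrow> z \<in> V"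
  by (induction rule: converse_rtrancl_induct) (use EV in auto)

lemma downstream_all: assumes v: "v \<in> R" and iI: "i \<in> I" shows "(i,v) \<in> E\<^sup>*"
proof (rule ccontr)
  assume nv: "(i,v) \<notin> E\<^sup>*"
  have iV: "i \<in> V" using iI IV by blast
  obtain Q where Q: "simple_path E Q i out" using sp_exists[OF iV] by blast
  have QD: "(i,q) \<in> E\<^sup>*" if "q \<in> set Q" for q using sp_reach[OF Q that] by blast
  have RD: "(i,r) \<notin> E\<^sup>*" if "r \<in> R" for r
    using strongE[OF that v] nv rtrancl_trans by metis
  have ex: "\<exists>x y. (x,y) \<in> E \<and> x \<notin> R \<and> y \<in> R \<and> (y,x) \<in> E\<^sup>*"
  proof (rule ccontr)
    assume H: "\<not> ?thesis"
    define U where "U = {u. \<exists>r\<in>R. (r,u) \<in> E\<^sup>*}"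
    have vV: "v \<in> V" using v RV by blast
    obtain i1 where i1: "i1 \<in> I" "(i1, v) \<in> E\<^sup>*" using core vV by (auto simp: core_network_def downstream_def)
    have i1V: "i1 \<in> V" using i1 IV by blast
    obtain Q1 where Q1: "simple_path E Q1 i1 out" using sp_exists[OF i1V] by blast
    have "i1 \<in> set Q1" using Q1 by (auto simp: sp_alt)
    then have i1R: "i1 \<notin> R" using no_simple[OF i1(1) Q1] by blast
    obtain x y where xy: "(i1,x) \<in> E\<^sup>*" "(x,y) \<in> E" "x \<notin> R" "y \<in> R"
      using entry_edge[OF i1(2) i1R v] by blast
    have xU: "x \<notin> U"
    proof
      assume "x \<in> U"
      then obtain r where "r \<in> R" "(r,x) \<in> E\<^sup>*" by (auto simp: U_def)
      then have "(y,x) \<in> E\<^sup>*" using strongE[OF xy(4)] rtrancl_trans by metis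
      then show False using H xy by blast
    qed
    have EVV: "E \<inter> V \<times> V = E" using EV by blast
    have xV: "x \<in> V" using xy(2) EV by blast
    obtain A where A: "simple_path E A i1 x" using exists_sp[of i1 x E V] xy(1) EVV i1V by auto
    have yV: "y \<in> V" using xy(2) EV by blast
    obtain B where B: "simple_path E B y out"
      using exists_sp[of y out E V] yV EVV core by (auto simp: core_network_def downstream_def)
    have AU: "a \<notin> U" if "a \<in> set A" for a
    proof
      assume "a \<in> U"
      then obtain r where "r \<in> R" "(r,a) \<in> E\<^sup>*" by (auto simp: U_def)
      moreover have "(a,x) \<in> E\<^sup>*" using sp_reach[OF A that] by blast
      ultimately show False using xU U_def rtrancl_trans by (metis (mono_tags, lifting) mem_Collect_eq)
    qed
    have BU: "b \<in> U" if "b \<in> set B" for b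
      using sp_reach[OF B that] xy(4) U_def by blast
    have "set A \<inter> set B = {}" using AU BU by blast
    then have AB: "simple_path E (A @ B) i1 out" using sp_append[OF A B xy(2)] by blast
    have "y \<in> set (A @ B)" using B by (auto simp: sp_alt)
    then show False using no_simple[OF i1(1) AB] xy(4) by blast
  qed
  then obtain x y where xy: "(x,y) \<in> E" "x \<notin> R" "y \<in> R" "(y,x) \<in> E\<^sup>*" by blast
  have xV: "x \<in> V" using xy(1) EV by blast
  have up: "z \<in> V - set Q" if "(z,x) \<in> E\<^sup>*" for z
  proof -
    have "z \<in> V" using upV[OF that xV] .
    moreover have "z \<notin> set Q"
    proof
      assume "z \<in> set Q"
      then have "(i,z) \<in> E\<^sup>*" by (rule QD)
      then have "(i,y) \<in> E\<^sup>*" using that xy(1) by (meson rtrancl_trans rtrancl.rtrancl_into_rtrancl)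
      then show False using RD xy(3) by blast
    qed
    ultimately show ?thesis by blast
  qed
  have p: "(y,x) \<in> (E \<inter> (V - set Q) \<times> (V - set Q))\<^sup>*" using restrict_up[OF xy(4)] up by blast
  have xQ: "x \<notin> set Q" using up by blast
  have yQ: "y \<notin> set Q" using QD RD xy(3) by blast
  show False using core_contra[OF iI Q xy(1) xy(2) xy(3) xQ yQ p] .
qed


lemma partA: "R \<subseteq> appendage_nodes V E I out"
proof
  fix v assume v: "v \<in> R"
  have "\<forall>i\<in>I. input_appendage E out i v"
  proof
    fix i assume iI: "i \<in> I"
    have "downstream E i v" using downstream_all[OF v iI] by (simp add: downstream_def)
    moreover have "\<not> input_simple E out i v"
      using no_simple[OF iI] v by (auto simp: input_simple_def)
    ultimately show "input_appendage E out i v" by (simp add: input_appendage_def)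
  qed
  then show "v \<in> appendage_nodes V E I out" using v RV
    by (auto simp: appendage_nodes_def absolutely_appendage_def)
qed

lemma partB: assumes iI: "i \<in> I" and S: "simple_path E S i out" and a: "a \<in> R"
  and b: "b \<in> compl_nodes V S - R"
  shows "\<not> path_equivalent E (compl_nodes V S) a b"
proof
  assume pe: "path_equivalent E (compl_nodes V S) a b"
  define K where "K = V - set S"
  have ab: "(a,b) \<in> (E \<inter> K \<times> K)\<^sup>*" "(b,a) \<in> (E \<inter> K \<times> K)\<^sup>*"
    using pe by (auto simp: path_equivalent_def path_within_def compl_nodes_def K_def)
  have bR: "b \<notin> R" using b by blast
  obtain x y where xy: "(b,x) \<in> (E \<inter> K \<times> K)\<^sup>*" "(x,y) \<in> E \<inter> K \<times> K" "x \<notin> R" "y \<in> R"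
    using entry_edge[OF ab(2) bR a] by blast
  have RK: "R \<subseteq> K" using RV no_simple[OF iI S] K_def by blast
  have "(y,a) \<in> (E \<inter> R \<times> R)\<^sup>*" using strong[OF xy(4) a] .
  moreover have "E \<inter> R \<times> R \<subseteq> E \<inter> K \<times> K" using RK by blast
  ultimately have "(y,a) \<in> (E \<inter> K \<times> K)\<^sup>*" using rtrancl_mono by blast
  then have p: "(y,x) \<in> (E \<inter> K \<times> K)\<^sup>*" using ab(1) xy(1) by (meson rtrancl_trans)
  have e: "(x,y) \<in> E" "x \<notin> set S" "y \<notin> set S" using xy(2) K_def by auto
  show False using core_contra[OF iI S e(1) xy(3) xy(4) e(2) e(3)] p K_def by blast
qed

lemma partC: "path_component E (appendage_nodes V E I out) R"
proof -
  let ?A = "appendage_nodes V E I out"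
  obtain a where a: "a \<in> R" using fiR by (auto simp: fully_indecomposable_def)
  have RA: "R \<subseteq> ?A" by (rule partA)
  obtain i where iI: "i \<in> I" using Ine by blast
  obtain S where S: "simple_path E S i out" using sp_exists IV iI by blast
  have AS: "?A \<subseteq> compl_nodes V S"
  proof
    fix w assume "w \<in> ?A"
    then have "w \<in> V" "input_appendage E out i w"
      using iI by (auto simp: appendage_nodes_def absolutely_appendage_def)
    then show "w \<in> compl_nodes V S" using S
      by (auto simp: input_appendage_def input_simple_def compl_nodes_def)
  qed
  have "R = {b. path_equivalent E ?A a b}"
  proof
    show "R \<subseteq> {b. path_equivalent E ?A a b}"
    proof
      fix b assume b: "b \<in> R"
      have m: "E \<inter> R \<times> R \<subseteq> E \<inter> ?A \<times> ?A" using RA by blast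
      have "(a,b) \<in> (E \<inter> ?A \<times> ?A)\<^sup>*" "(b,a) \<in> (E \<inter> ?A \<times> ?A)\<^sup>*"
        using rtrancl_mono[OF m] strong[OF a b] strong[OF b a] by blast+
      then show "b \<in> {b. path_equivalent E ?A a b}" using a b RA
        by (auto simp: path_equivalent_def path_within_def)
    qed
  next
    show "{b. path_equivalent E ?A a b} \<subseteq> R"
    proof
      fix b assume "b \<in> {b. path_equivalent E ?A a b}"
      then have pe: "path_equivalent E ?A a b" by blast
      show "b \<in> R"
      proof (rule ccontr)
        assume bR: "b \<notin> R"
        have m: "E \<inter> ?A \<times> ?A \<subseteq> E \<inter> compl_nodes V S \<times> compl_nodes V S" using AS by blast
        have "path_equivalent E (compl_nodes V S) a b"
          using pe AS rtrancl_mono[OF m] by (auto simp: path_equivalent_def path_within_def)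
        moreover have "b \<in> compl_nodes V S - R" using pe AS bR
          by (auto simp: path_equivalent_def path_within_def)
        ultimately show False using partB[OF iI S a] by blast
      qed
    qed
  qed
  then show ?thesis using a RA by (auto simp: path_component_def)
qed

end

theorem theorem3p13:
  fixes V :: "'v set" and E :: "('v \<times> 'v) set" and I :: "'v set" and out :: 'v
    and bs :: "('v set \<times> 'v set) list" and R C :: "'v set"
  assumes "core_network V E I out"
    and "FK_decomposition V (H_entry E I out) bs"
    and "(R, C) \<in> set bs"
    and "appendage_block E I out R C"
  shows "R \<subseteq> appendage_nodes V E I out \<and>
    (\<forall>i\<in>I. \<forall>S. simple_path E S i out \<longrightarrow>
           (\<forall>a\<in>R. \<forall>b\<in>compl_nodes V S - R. \<not> path_equivalent E (compl_nodes V S) a b)) \<and>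
    path_component E (appendage_nodes V E I out) R"
proof -
  note core = assms(1) and fk = assms(2) and inRC = assms(3) and ab = assms(4)
  have finV: "finite V" using core by (simp add: core_network_def network_def)
  have U: "(\<Union>b\<in>set bs. fst b) = V" "(\<Union>b\<in>set bs. snd b) = V"
    using fk by (simp_all add: FK_decomposition_def)
  have RV: "R \<subseteq> V" using U(1) inRC by force
  have CV: "C \<subseteq> V" using U(2) inRC by force
  have finR: "finite R" using RV finV finite_subset by blast
  have finC: "finite C" using CV finV finite_subset by blast
  have fi: "fully_indecomposable (H_entry E I out) R C"
    using fk inRC unfolding FK_decomposition_def by fastforce
  define W where "W = {l. l \<in> R \<and> l \<in> C \<and> H_entry E I out l l = Jac l l}"
  have "W \<subseteq> R" unfolding W_def by blast
  moreover have "card W = card R" using ab by (simp add: appendage_block_def W_def)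
  ultimately have WR: "W = R" using card_subset_eq[OF finR] by blast
  have Jo: "H_entry E I out out out \<noteq> Jac out out" by (simp add: H_entry_def)
  have outR: "out \<notin> R" using WR Jo unfolding W_def by blast
  have RC: "R \<subseteq> C" using WR unfolding W_def by blast
  have "card R = card C" using fi by (simp add: fully_indecomposable_def)
  then have "R = C" using card_subset_eq[OF finC RC] by simp
  then have inR: "(R, R) \<in> set bs" using inRC by simp
  interpret blk V E I out bs R
    using core fk inR outR by (unfold_locales) auto
  show ?thesis using partA partB partC by blast
qed

end
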